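(* For all $n\ge1$ and $a>0$, writing $R_k=R_k(a)$, $$R_{n-1}R_{n+1}(R_nR_{n-1}+8n)(R_{n+1}R_n+8n+8)=\Big[8a^2R_n+R_nR_{n-1}R_{n+1}-4(aR_n+n+1)R_{n+1}-4(aR_n+n)R_{n-1}\Big]^2.$$
   Context: Fix $a>0$. Let $w(x)=e^{-x^2}\chi_{\mathbb{R}\setminus(-a,a)}(x)$. Let $P_n$ be the monic orthogonal polynomials for $w$ on $\mathbb{R}$, with $h_n=\int P_n^2w\,dx$. Define $$R_n(a)=\frac{2e^{-a^2}P_n(a)^2}{h_n(a)}.$$ *)

theory Defs
  imports "HOL-Analysis.Analysis" "HOL-Computational_Algebra.Polynomial"
begin

definition wgt :: "real \<Rightarrow> real \<Rightarrow> real" where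
  "wgt a x = exp (- (x^2)) * indicator (UNIV - {-a<..<a}) x"

definition OP :: "real \<Rightarrow> nat \<Rightarrow> real poly" where
  "OP a n = (THE p. degree p = n \<and> lead_coeff p = 1 \<and>
      (\<forall>q::real poly. degree q < n \<longrightarrow>
          (LINT x|lborel. poly p x * poly q x * wgt a x) = 0))"

definition hn :: "real \<Rightarrow> nat \<Rightarrow> real" where
  "hn a n = (LINT x|lborel. (poly (OP a n) x)^2 * wgt a x)"

definition Rn :: "real \<Rightarrow> nat \<Rightarrow> real" where
  "Rn a n = 2 * exp (- (a^2)) * (poly (OP a n) a)^2 / hn a n"

end

theory Submission imports Defs "HOL-Probability.Distributions" "HOL-Real_Asymp.Real_Asymp" begin

lemma gauss_mom_int: "integrable lborel (\<lambda>x::real. x^k * exp (-(x^2)))"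
proof -
  have e: "normal_density 0 ((1/sqrt 2)) x = exp (-(x^2)) / sqrt pi" for x
    by (simp add: normal_density_def power2_eq_square real_sqrt_divide real_sqrt_mult divide_simps)
  have "integrable lborel (\<lambda>x. sqrt pi * (normal_density 0 ((1/sqrt 2)) x * (x - 0)^k))"
    by (intro integrable_mult_right integrable_normal_moment) auto
  then show ?thesis by (simp add: e mult_ac)
qed

lemma gauss_poly_int: "integrable lborel (\<lambda>x::real. poly p x * exp (-(x^2)))"
proof -
  have "integrable lborel (\<lambda>x. \<Sum>i\<le>degree p. coeff p i * (x^i * exp (-(x^2))))"
    by (intro Bochner_Integration.integrable_sum integrable_mult_right gauss_mom_int)
  moreover have "(\<lambda>x::real. poly p x * exp (-(x^2))) = (\<lambda>x. \<Sum>i\<le>degree p. coeff p i * (x^i * exp (-(x^2))))"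
    by (simp add: fun_eq_iff poly_altdef sum_distrib_left mult_ac)
  ultimately show ?thesis by simp
qed

lemma gauss_poly_ind_int: 
  assumes "S \<in> sets lborel"
  shows "integrable lborel (\<lambda>x::real. indicator S x * (poly p x * exp (-(x^2))))"
  using integrable_real_mult_indicator[OF assms gauss_poly_int[of p]] by (simp add: mult.commute)

lemma wgt_eq: "wgt a x = indicator (UNIV - {-a<..<a}) x * exp (-(x^2))"
  by (simp add: wgt_def)

lemma wgt_int: "integrable lborel (\<lambda>x. poly p x * wgt a x)"
proof -
  have "integrable lborel (\<lambda>x::real. indicator (UNIV - {-a<..<a}) x * (poly p x * exp (-(x^2))))"
    by (intro gauss_poly_ind_int) auto
  then show ?thesis by (simp add: wgt_eq mult_ac)
qed

lemma mom_lim: "((\<lambda>x::real. x^k * exp (-(x^2))) \<longlongrightarrow> 0) at_top"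
proof -
  have "((\<lambda>x::real. x^k / exp x * exp (x - x^2)) \<longlongrightarrow> 0*0) at_top"
    by (intro tendsto_mult tendsto_power_div_exp_0) real_asymp
  moreover have "(\<lambda>x::real. x^k / exp x * exp (x - x^2)) = (\<lambda>x. x^k * exp (-(x^2)))"
    by (simp add: fun_eq_iff exp_diff exp_minus field_simps)
  ultimately show ?thesis by simp
qed

lemma poly_lim: "((\<lambda>x::real. poly p x * exp (-(x^2))) \<longlongrightarrow> 0) at_top"
proof -
  have "((\<lambda>x::real. \<Sum>i\<le>degree p. coeff p i * (x^i * exp (-(x^2)))) \<longlongrightarrow> (\<Sum>i\<le>degree p. coeff p i * 0)) at_top"
    by (intro tendsto_sum tendsto_mult tendsto_const mom_lim)
  moreover have "(\<lambda>x::real. poly p x * exp (-(x^2))) = (\<lambda>x. \<Sum>i\<le>degree p. coeff p i * (x^i * exp (-(x^2))))"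
    by (simp add: fun_eq_iff poly_altdef sum_distrib_left mult_ac)
  ultimately show ?thesis by simp
qed

lemma half_FTC:
  fixes f :: "real poly"
  shows "(LINT x|lborel. indicator {c..} x * (poly (pderiv f - [:0,2:]*f) x * exp (-(x^2))))
          = - (poly f c * exp (-(c^2)))"
proof -
  define g where "g = (\<lambda>x. poly (pderiv f - [:0,2:]*f) x * exp (-(x^2)))"
  define F where "F = (\<lambda>x. poly f x * exp (-(x^2)))"
  have int: "integrable lborel (\<lambda>x. indicator {c..} x * g x)"
    unfolding g_def by (rule gauss_poly_ind_int) auto
  have lim1: "((\<lambda>y. LINT x|lborel. indicator {..y} x *\<^sub>R (indicator {c..} x * g x))
      \<longlongrightarrow> (LINT x|lborel. indicator {c..} x * g x)) at_top"
    by (rule tendsto_integral_at_top) (auto intro: int)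
  have der: "(F has_real_derivative g x) (at x)" for x
  proof -
    have "(F has_real_derivative (poly (pderiv f) x * exp (-(x^2)) + poly f x * (exp (-(x^2)) * (-(2*x))))) (at x)"
      unfolding F_def
      by (rule derivative_eq_intros poly_DERIV refl | simp)+
    moreover have "poly (pderiv f) x * exp (-(x^2)) + poly f x * (exp (-(x^2)) * (-(2*x))) = g x"
      by (simp add: g_def algebra_simps)
    ultimately show ?thesis by simp
  qed
  have cont: "continuous_on S g" for S
    unfolding g_def by (intro continuous_intros)
  have ev: "\<forall>\<^sub>F y in at_top. (LINT x|lborel. indicator {..y} x *\<^sub>R (indicator {c..} x * g x)) = F y - F c"
  proof (rule eventually_at_top_linorder[THEN iffD2], rule exI[of _ c], intro allI impI)
    fix y assume "c \<le> y"
    have "(LINT x|lborel. indicator {..y} x *\<^sub>R (indicator {c..} x * g x)) = (LINT x|lborel. indicator {c..y} x *\<^sub>R g x)"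
      by (intro Bochner_Integration.integral_cong) (auto split: split_indicator)
    also have "\<dots> = F y - F c"
      by (rule integral_FTC_atLeastAtMost[OF \<open>c \<le> y\<close>])
        (auto intro: cont has_vector_derivative_at_within der[THEN has_real_derivative_iff_has_vector_derivative[THEN iffD1]])
    finally show "(LINT x|lborel. indicator {..y} x *\<^sub>R (indicator {c..} x * g x)) = F y - F c" .
  qed
  have lim2: "((\<lambda>y. F y - F c) \<longlongrightarrow> 0 - F c) at_top"
    unfolding F_def by (intro tendsto_diff poly_lim tendsto_const)
  have "((\<lambda>y. LINT x|lborel. indicator {..y} x *\<^sub>R (indicator {c..} x * g x)) \<longlongrightarrow> 0 - F c) at_top"
    using Lim_transform_eventually[OF lim2] ev by (simp add: eventually_mono)
  then have "(LINT x|lborel. indicator {c..} x * g x) = 0 - F c"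
    using tendsto_unique[OF _ lim1] by simp
  then show ?thesis by (simp add: g_def F_def)
qed

definition gI :: "real \<Rightarrow> real poly \<Rightarrow> real" where
  "gI a p = (LINT x|lborel. poly p x * wgt a x)"

lemma gI_add: "gI a (p + q) = gI a p + gI a q"
  unfolding gI_def by (simp add: distrib_right Bochner_Integration.integral_add wgt_int)

lemma gI_smult: "gI a (smult c p) = c * gI a p"
  unfolding gI_def by (simp add: mult.assoc)

lemma gI_minus: "gI a (- p) = - gI a p"
  unfolding gI_def by simp

lemma gI_diff: "gI a (p - q) = gI a p - gI a q"
  unfolding gI_def by (simp add: left_diff_distrib Bochner_Integration.integral_diff wgt_int)

lemma wgt_reflect: "wgt a (- x) = wgt a x"
  by (simp add: wgt_def indicator_def) linarith

lemma gI_reflect: "gI a (pcompose p [:0,-1:]) = gI a p"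
proof -
  have "gI a p = \<bar>-1\<bar> *\<^sub>R (LINT x|lborel. poly p (0 + (-1) * x) * wgt a (0 + (-1) * x))"
    unfolding gI_def by (rule lborel_integral_real_affine) simp
  then show ?thesis by (simp add: gI_def poly_pcompose wgt_reflect)
qed

lemma gI_odd_zero: assumes "pcompose p [:0,-1:] = - p" shows "gI a p = 0"
  using gI_reflect[of a p] assms gI_minus[of a p] by simp

lemma wgt_nonneg: "wgt a x \<ge> 0"
  by (simp add: wgt_def)

lemma gI_sq_nonneg: "gI a (p * p) \<ge> 0"
  unfolding gI_def by (intro integral_nonneg_AE AE_I2) (simp add: wgt_nonneg)

lemma gI_sq_pos: assumes "p \<noteq> 0" shows "gI a (p * p) > 0"
proof (rule ccontr)
  assume "\<not> gI a (p * p) > 0"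
  then have z: "gI a (p * p) = 0" using gI_sq_nonneg[of a p] by linarith
  have "AE x in lborel. poly (p*p) x * wgt a x = 0"
    using z unfolding gI_def
    using wgt_int[of "p*p" a] by (subst integral_nonneg_eq_0_iff_AE[symmetric]) (auto simp: wgt_nonneg)
  then obtain N where N: "{x \<in> space lborel. \<not> poly (p*p) x * wgt a x = 0} \<subseteq> N"
    "emeasure lborel N = 0" "N \<in> sets lborel"
    by (rule AE_E)
  define Z where "Z = {x. poly p x = 0}"
  have fZ: "finite Z" unfolding Z_def using poly_roots_finite[OF assms] .
  have sub: "{\<bar>a\<bar><..<\<bar>a\<bar>+1} - Z \<subseteq> N"
  proof
    fix x assume x: "x \<in> {\<bar>a\<bar><..<\<bar>a\<bar>+1} - Z"
    then have "wgt a x = exp (-(x^2))" by (auto simp: wgt_def indicator_def)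
    with x have "poly (p*p) x * wgt a x \<noteq> 0" by (auto simp: Z_def)
    with N(1) show "x \<in> N" by auto
  qed
  have "emeasure lborel ({\<bar>a\<bar><..<\<bar>a\<bar>+1} - Z) = emeasure lborel {\<bar>a\<bar><..<\<bar>a\<bar>+1}"
    by (intro emeasure_Diff_null_set finite_imp_null_set_lborel fZ) auto
  also have "\<dots> = 1" by simp
  finally have "1 \<le> emeasure lborel N"
    using emeasure_mono[OF sub N(3)] by simp
  with N(2) show False by simp
qed

lemma poly_Q_reflect:
  fixes f :: "real poly"
  shows "poly (pderiv f - [:0,2:]*f) (-x) = - poly (pderiv (pcompose f [:0,-1:]) - [:0,2:]*(pcompose f [:0,-1:])) x"
  by (simp add: pderiv_pcompose poly_pcompose pderiv_pCons algebra_simps)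

lemma abs_m1_scale: "\<bar>-1::real\<bar> *\<^sub>R (y::real) = y" by simp

lemma gI_IBP:
  assumes "a > 0"
  shows "gI a (pderiv f) = gI a ([:0,2:]*f) - exp (-(a^2)) * (poly f a - poly f (-a))"
proof -
  define Q where "Q = (\<lambda>f::real poly. pderiv f - [:0,2:]*f)"
  define g where "g = pcompose f [:0,-1:]"
  have w: "wgt a x = indicator {a..} x * exp (-(x^2)) + indicator {..-a} x * exp (-(x^2))" for x
    using assms by (auto simp: wgt_def indicator_def)
  have "gI a (Q f) = (LINT x|lborel. indicator {a..} x * (poly (Q f) x * exp (-(x^2)))
        + indicator {..-a} x * (poly (Q f) x * exp (-(x^2))))"
    unfolding gI_def w by (intro Bochner_Integration.integral_cong) (auto simp: algebra_simps)
  also have "\<dots> = (LINT x|lborel. indicator {a..} x * (poly (Q f) x * exp (-(x^2))))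
        + (LINT x|lborel. indicator {..-a} x * (poly (Q f) x * exp (-(x^2))))"
    by (intro Bochner_Integration.integral_add gauss_poly_ind_int) auto
  also have "(LINT x|lborel. indicator {a..} x * (poly (Q f) x * exp (-(x^2)))) = - (poly f a * exp (-(a^2)))"
    unfolding Q_def by (rule half_FTC)
  also have "(LINT x|lborel. indicator {..-a} x * (poly (Q f) x * exp (-(x^2))))
      = \<bar>-1\<bar> *\<^sub>R (LINT x|lborel. indicator {..-a} (0 + (-1) * x) * (poly (Q f) (0 + (-1) * x) * exp (-((0 + (-1) * x)^2))))"
    by (rule lborel_integral_real_affine) simp
  also have "\<dots> = (LINT x|lborel. - (indicator {a..} x * (poly (Q g) x * exp (-(x^2)))))"
    unfolding Q_def g_def abs_m1_scale
    by (intro Bochner_Integration.integral_cong refl) (auto simp: pderiv_pcompose poly_pcompose pderiv_pCons algebra_simps indicator_def)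
  also have "\<dots> = - (LINT x|lborel. indicator {a..} x * (poly (Q g) x * exp (-(x^2))))"
    by simp
  also have "(LINT x|lborel. indicator {a..} x * (poly (Q g) x * exp (-(x^2)))) = - (poly g a * exp (-(a^2)))"
    unfolding Q_def by (rule half_FTC)
  finally have "gI a (Q f) = - (poly f a * exp (-(a^2))) + poly f (-a) * exp (-(a^2))"
    by (simp add: g_def poly_pcompose)
  moreover have "gI a (Q f) = gI a (pderiv f) - gI a ([:0,2:]*f)"
    unfolding Q_def by (rule gI_diff)
  ultimately show ?thesis by (simp add: algebra_simps)
qed

definition isOP :: "real \<Rightarrow> nat \<Rightarrow> real poly \<Rightarrow> bool" where
  "isOP a n p \<longleftrightarrow> (degree p = n \<and> lead_coeff p = 1 \<and>
      (\<forall>q::real poly. degree q < n \<longrightarrow>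
          (LINT x|lborel. poly p x * poly q x * wgt a x) = 0))"

lemma OP_THE: "OP a n = (THE p. isOP a n p)"
  unfolding OP_def isOP_def ..

lemma gI_mult_eq: "(LINT x|lborel. poly p x * poly q x * wgt a x) = gI a (p * q)"
  unfolding gI_def by simp

lemma isOP_iff: "isOP a n p \<longleftrightarrow> degree p = n \<and> lead_coeff p = 1 \<and>
      (\<forall>q. degree q < n \<longrightarrow> gI a (p * q) = 0)"
  unfolding isOP_def gI_mult_eq ..

lemma gI_comm: "gI a (p * q) = gI a (q * p)"
  by (simp add: mult.commute)

lemma gI_zero[simp]: "gI a 0 = 0"
  unfolding gI_def by simp

lemma gI_sum: "gI a (\<Sum>i\<in>A. f i) = (\<Sum>i\<in>A. gI a (f i))"
  by (induction A rule: infinite_finite_induct) (auto simp: gI_add)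

lemma deg_lt_or_zero:
  fixes r :: "real poly"
  assumes "degree r \<le> n" "coeff r n = 0"
  shows "r = 0 \<or> degree r < n"
proof (cases "r = 0")
  case False
  then have "coeff r (degree r) \<noteq> 0" by simp
  with assms show ?thesis by (cases "degree r = n") auto
qed simp

lemma span_orth:
  fixes P :: "nat \<Rightarrow> real poly"
  assumes P: "\<And>k. k < n \<Longrightarrow> degree (P k) = k \<and> lead_coeff (P k) = 1"
    and orth: "\<And>k. k < n \<Longrightarrow> gI a (p * P k) = 0"
  shows "degree q < n \<or> q = 0 \<Longrightarrow> gI a (p * q) = 0"
proof (induction "degree q" arbitrary: q rule: less_induct)
  case less
  show ?case
  proof (cases "q = 0")
    case True then show ?thesis by simp
  next
    case False
    with less.prems have dq: "degree q < n" by auto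
    define m where "m = degree q"
    define r where "r = q - smult (lead_coeff q) (P m)"
    have Pm: "degree (P m) = m" "lead_coeff (P m) = 1" using P[of m] dq by (auto simp: m_def)
    have "degree r \<le> m" unfolding r_def using Pm
      by (intro degree_diff_le) (auto simp: m_def intro: order_trans[OF degree_smult_le])
    moreover have "coeff r m = 0" unfolding r_def using Pm by (simp add: m_def)
    ultimately have "r = 0 \<or> degree r < m" by (rule deg_lt_or_zero)
    then have "r = 0 \<or> (degree r < degree q \<and> degree r < n)" using dq m_def by auto
    then have r0: "gI a (p * r) = 0"
      using less.hyps[of r] by (cases "r = 0") auto
    have "gI a (p * q) = gI a (p * (smult (lead_coeff q) (P m) + r))"
      unfolding r_def by simp
    also have "\<dots> = lead_coeff q * gI a (p * P m) + gI a (p * r)"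
      by (simp only: distrib_left gI_add gI_smult mult_smult_right)
    finally have "gI a (p * q) = lead_coeff q * gI a (p * P m) + gI a (p * r)" .
    then show ?thesis using r0 orth[of m] dq m_def by simp
  qed
qed

lemma isOP_unique:
  assumes "isOP a n p1" "isOP a n p2" shows "p1 = p2"
proof (rule ccontr)
  assume ne: "p1 \<noteq> p2"
  define d where "d = p1 - p2"
  have "d \<noteq> 0" using ne d_def by simp
  have "degree d \<le> n" using assms unfolding d_def isOP_iff by (auto intro: degree_diff_le)
  moreover have "coeff d n = 0" using assms unfolding d_def isOP_iff by auto
  ultimately have "degree d < n" using deg_lt_or_zero \<open>d \<noteq> 0\<close> by blast
  then have "gI a (p1 * d) = 0" "gI a (p2 * d) = 0" using assms unfolding isOP_iff by auto
  then have "gI a (d * d) = 0" unfolding d_def by (simp add: left_diff_distrib gI_diff)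
  with gI_sq_pos[OF \<open>d \<noteq> 0\<close>, of a] show False by simp
qed

lemma isOP_exists: "\<exists>p. isOP a n p"
proof (induction n rule: less_induct)
  case (less n)
  have isP: "isOP a k (OP a k)" if "k < n" for k
  proof -
    from less that obtain p where p: "isOP a k p" by blast
    have "(THE p. isOP a k p) = p" using p isOP_unique by blast
    with p show ?thesis by (simp add: OP_THE)
  qed
  define P where "P = OP a"
  have Pd: "degree (P k) = k \<and> lead_coeff (P k) = 1" if "k < n" for k
    using isP[OF that] unfolding P_def isOP_iff by auto
  have PP: "gI a (P k * P j) = 0" if "k < n" "j < n" "k \<noteq> j" for k j
  proof (cases "j < k")
    case True then show ?thesis using isP[OF that(1)] Pd[OF that(2)] unfolding P_def isOP_iff by auto
  next
    case False then have "k < j" using that by auto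
    then show ?thesis using isP[OF that(2)] Pd[OF that(1)] gI_comm[of a "P k" "P j"]
      unfolding P_def isOP_iff by auto
  qed
  define c where "c = (\<lambda>k. gI a (monom 1 n * P k) / gI a (P k * P k))"
  define p where "p = monom 1 n - (\<Sum>k<n. smult (c k) (P k))"
  have ds: "degree (\<Sum>k<n. smult (c k) (P k)) \<le> n"
    using Pd by (intro degree_sum_le) (auto intro: order_trans[OF degree_smult_le] less_imp_le)
  have cs: "coeff (\<Sum>k<n. smult (c k) (P k)) n = 0"
    using Pd by (auto simp: coeff_sum intro!: sum.neutral coeff_eq_0)
  have degp: "degree p \<le> n" unfolding p_def using ds
    by (intro degree_diff_le) (auto simp: degree_monom_eq)
  have cp: "coeff p n = 1" unfolding p_def using cs by (simp add: coeff_monom)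
  have deg: "degree p = n" using degp le_degree[of p n] cp by simp
  have lc: "lead_coeff p = 1" using deg cp by simp
  have orthP: "gI a (p * P j) = 0" if "j < n" for j
  proof -
    have pos: "gI a (P j * P j) > 0"
      using Pd[OF that] by (intro gI_sq_pos) auto
    have "gI a (p * P j) = gI a (monom 1 n * P j) - (\<Sum>k<n. c k * gI a (P k * P j))"
      unfolding p_def by (simp add: left_diff_distrib gI_diff sum_distrib_right gI_sum gI_smult)
    also have "(\<Sum>k<n. c k * gI a (P k * P j)) = (\<Sum>k<n. if k = j then c j * gI a (P j * P j) else 0)"
      using that PP by (intro sum.cong) auto
    also have "\<dots> = c j * gI a (P j * P j)" using that by simp
    also have "\<dots> = gI a (monom 1 n * P j)" unfolding c_def using pos by simp
    finally show ?thesis by simp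
  qed
  have "gI a (p * q) = 0" if "degree q < n" for q
    by (rule span_orth[of n P a p q]) (use Pd orthP that in blast)+
  then have "isOP a n p" unfolding isOP_iff using deg lc by auto
  then show ?case by blast
qed

lemma OP_isOP: "isOP a n (OP a n)"
proof -
  obtain p where p: "isOP a n p" using isOP_exists by blast
  have "(THE p. isOP a n p) = p" using p isOP_unique by blast
  with p show ?thesis by (simp add: OP_THE)
qed

lemma OP_unique: "isOP a n p \<Longrightarrow> OP a n = p"
  using OP_isOP isOP_unique by blast

lemma OP_deg: "degree (OP a n) = n" and OP_lc: "lead_coeff (OP a n) = 1"
  using OP_isOP[of a n] unfolding isOP_iff by auto

lemma OP_ne0: "OP a n \<noteq> 0" using OP_lc[of a n] by auto

lemma OP_orth: "degree q < n \<or> q = 0 \<Longrightarrow> gI a (OP a n * q) = 0"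
  using OP_isOP[of a n] unfolding isOP_iff by auto

lemma hn_eq: "hn a n = gI a (OP a n * OP a n)"
  unfolding hn_def gI_def by (simp add: power2_eq_square)

lemma hn_pos: "hn a n > 0"
  unfolding hn_eq using gI_sq_pos[OF OP_ne0] .

lemma OP_coeff_formula:
  assumes "degree q \<le> n"
  shows "gI a (OP a n * q) = coeff q n * hn a n"
proof -
  define r where "r = q - smult (coeff q n) (OP a n)"
  have "degree r \<le> n" unfolding r_def using assms
    by (intro degree_diff_le) (auto intro: order_trans[OF degree_smult_le] simp: OP_deg)
  moreover have "coeff r n = 0" unfolding r_def using OP_lc[of a n] by (simp add: OP_deg)
  ultimately have "r = 0 \<or> degree r < n" by (rule deg_lt_or_zero)
  then have r0: "gI a (OP a n * r) = 0" using OP_orth by blast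
  have "gI a (OP a n * q) = gI a (OP a n * (smult (coeff q n) (OP a n) + r))"
    unfolding r_def by simp
  also have "\<dots> = coeff q n * gI a (OP a n * OP a n) + gI a (OP a n * r)"
    by (simp only: distrib_left gI_add gI_smult mult_smult_right)
  finally have "gI a (OP a n * q) = coeff q n * gI a (OP a n * OP a n) + gI a (OP a n * r)" .
  then show ?thesis using r0 by (simp add: hn_eq)
qed

lemma pcomp_neg_twice: "pcompose (pcompose p [:0,-1::real:]) [:0,-1:] = p"
proof -
  have "pcompose [:0,-1::real:] [:0,-1:] = [:0,1:]" by (simp add: pcompose_pCons)
  then show ?thesis by (metis pcompose_assoc pcompose_idR)
qed

lemma OP_parity: "pcompose (OP a n) [:0,-1:] = smult ((-1)^n) (OP a n)"
proof -
  define R where "R = (\<lambda>p::real poly. pcompose p [:0,-1:])"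
  define Q where "Q = smult ((-1)^n) (R (OP a n))"
  have "isOP a n Q"
    unfolding isOP_iff
  proof (intro conjI allI impI)
    show "degree Q = n" unfolding Q_def R_def by (simp add: degree_pcompose OP_deg)
    show "lead_coeff Q = 1" unfolding Q_def R_def
      using OP_lc[of a n] by (simp add: lead_coeff_smult lead_coeff_comp OP_deg)
    fix q :: "real poly" assume q: "degree q < n"
    have "Q * q = smult ((-1)^n) (R (OP a n * R q))"
      unfolding Q_def R_def by (simp add: pcompose_mult pcomp_neg_twice)
    then have "gI a (Q * q) = (-1)^n * gI a (OP a n * R q)"
      by (simp add: gI_smult R_def gI_reflect)
    also have "gI a (OP a n * R q) = 0"
      using q by (intro OP_orth) (simp add: R_def degree_pcompose)
    finally show "gI a (Q * q) = 0" by simp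
  qed
  then have "OP a n = Q" by (rule OP_unique)
  then have "smult ((-1)^n) (OP a n) = smult ((-1)^n) Q" by simp
  also have "\<dots> = R (OP a n)" unfolding Q_def by simp
  finally show ?thesis by (simp add: R_def)
qed

lemma poly_OP_neg: "poly (OP a n) (-x) = (-1)^n * poly (OP a n) x"
proof -
  have "poly (pcompose (OP a n) [:0,-1:]) x = poly (smult ((-1)^n) (OP a n)) x"
    by (simp only: OP_parity)
  then show ?thesis by (simp add: poly_pcompose)
qed

lemma orth_upto:
  assumes "degree q \<le> n"
    and r: "\<And>r. r = 0 \<or> degree r < n \<Longrightarrow> gI a (d * r) = 0"
    and top: "gI a (d * OP a n) = 0"
  shows "gI a (d * q) = 0"
proof -
  define r where "r = q - smult (coeff q n) (OP a n)"
  have "degree r \<le> n" unfolding r_def using assms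
    by (intro degree_diff_le) (auto intro: order_trans[OF degree_smult_le] simp: OP_deg)
  moreover have "coeff r n = 0" unfolding r_def using OP_lc[of a n] by (simp add: OP_deg)
  ultimately have "r = 0 \<or> degree r < n" by (rule deg_lt_or_zero)
  then have r0: "gI a (d * r) = 0" using r by blast
  have "gI a (d * q) = gI a (d * (smult (coeff q n) (OP a n) + r))"
    unfolding r_def by simp
  also have "\<dots> = coeff q n * gI a (d * OP a n) + gI a (d * r)"
    by (simp only: distrib_left gI_add gI_smult mult_smult_right)
  finally show ?thesis using r0 top by simp
qed

lemma OP_rec:
  assumes "n \<ge> 1"
  shows "OP a (n+1) = pCons 0 (OP a n) - smult (hn a n / hn a (n-1)) (OP a (n-1))"
proof -
  define \<beta> where "\<beta> = hn a n / hn a (n-1)"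
  define X where "X = pCons 0 (OP a n)"
  define d where "d = X - OP a (n+1) - smult \<beta> (OP a (n-1))"
  have hpos: "hn a (n-1) > 0" by (rule hn_pos)
  have ddeg: "degree d \<le> n"
  proof (rule degree_le, intro allI impI)
    fix i assume "n < i"
    show "coeff d i = 0"
    proof (cases "i = n+1")
      case True
      then show ?thesis using assms OP_lc[of a n] OP_lc[of a "n+1"]
        by (simp add: d_def X_def OP_deg coeff_eq_0)
    next
      case False
      then have "i > n+1" using \<open>n < i\<close> by simp
      then obtain j where j: "i = Suc j" "j > n" by (cases i) auto
      then show ?thesis using assms \<open>i > n+1\<close>
        by (simp add: d_def X_def coeff_eq_0 OP_deg)
    qed
  qed
  have XP: "gI a (X * OP a n) = 0"
  proof (rule gI_odd_zero)
    show "pcompose (X * OP a n) [:0, -1:] = - (X * OP a n)"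
      by (simp add: poly_eq_poly_eq_iff[symmetric] fun_eq_iff poly_pcompose X_def poly_OP_neg)
  qed
  have top: "gI a (d * OP a n) = 0"
    unfolding d_def using XP OP_orth[of "OP a n" "n+1" a] OP_orth[of "OP a (n-1)" n a] assms
    by (simp add: left_diff_distrib gI_diff mult_smult_left gI_smult OP_deg gI_comm[of a _ "OP a n"])
  have low: "gI a (d * r) = 0" if r: "r = 0 \<or> degree r < n" for r
  proof (cases "r = 0")
    case False
    then have dr: "degree r \<le> n - 1" using r by auto
    have "gI a (X * r) = gI a (OP a n * pCons 0 r)"
      unfolding X_def by (simp add: mult.commute)
    also have "\<dots> = coeff (pCons 0 r) n * hn a n"
      using dr assms by (intro OP_coeff_formula) (auto intro: order_trans[OF degree_pCons_le])
    also have "coeff (pCons 0 r) n = coeff r (n-1)"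
      using assms by (cases n) auto
    finally have x: "gI a (X * r) = coeff r (n-1) * hn a n" .
    have y: "gI a (OP a (n+1) * r) = 0" using r by (intro OP_orth) auto
    have z: "gI a (OP a (n-1) * r) = coeff r (n-1) * hn a (n-1)"
      using dr by (rule OP_coeff_formula)
    have "gI a (d * r) = gI a (X * r) - gI a (OP a (n+1) * r) - \<beta> * gI a (OP a (n-1) * r)"
      unfolding d_def by (simp add: left_diff_distrib gI_diff mult_smult_left gI_smult)
    also have "\<dots> = 0" unfolding x y z \<beta>_def using hpos by simp
    finally show ?thesis .
  qed simp
  have "gI a (d * d) = 0" using ddeg low top by (rule orth_upto)
  then have "d = 0" using gI_sq_pos[of d a] by (cases "d = 0") auto
  then show ?thesis unfolding d_def X_def \<beta>_def by (simp add: algebra_simps)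
qed

lemma poly_OP_rec:
  assumes "n \<ge> 1"
  shows "poly (OP a (n+1)) x * hn a (n-1) = x * poly (OP a n) x * hn a (n-1) - hn a n * poly (OP a (n-1)) x"
proof -
  have "hn a (n-1) > 0" by (rule hn_pos)
  then show ?thesis by (subst OP_rec[OF assms]) (simp add: algebra_simps)
qed

lemma IBP_id:
  assumes "a > 0" "k \<ge> 1"
  shows "real k * hn a (k-1) = 2 * hn a k - exp (-(a^2)) * (2 * poly (OP a k) a * poly (OP a (k-1)) a)"
proof -
  define f where "f = OP a k * OP a (k-1)"
  have "gI a (pderiv f) = gI a (OP a (k-1) * pderiv (OP a k)) + gI a (OP a k * pderiv (OP a (k-1)))"
    unfolding f_def by (simp add: pderiv_mult gI_add mult.commute)
  also have "gI a (OP a k * pderiv (OP a (k-1))) = 0"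
    using assms by (intro OP_orth) (auto simp: degree_pderiv OP_deg)
  also have "gI a (OP a (k-1) * pderiv (OP a k)) = coeff (pderiv (OP a k)) (k-1) * hn a (k-1)"
    by (intro OP_coeff_formula) (simp add: degree_pderiv OP_deg)
  also have "coeff (pderiv (OP a k)) (k-1) = real k"
    using assms OP_lc[of a k] by (simp add: coeff_pderiv OP_deg)
  finally have lhs: "gI a (pderiv f) = real k * hn a (k-1)" by simp
  have eq: "[:0,2:] * f = smult 2 (OP a k * pCons 0 (OP a (k-1)))"
    unfolding f_def by (simp add: poly_eq_poly_eq_iff[symmetric] fun_eq_iff)
  have "gI a ([:0,2:] * f) = 2 * gI a (OP a k * pCons 0 (OP a (k-1)))"
    by (simp only: eq gI_smult)
  also have "gI a (OP a k * pCons 0 (OP a (k-1))) = coeff (pCons 0 (OP a (k-1))) k * hn a k"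
    using assms by (intro OP_coeff_formula order_trans[OF degree_pCons_le]) (simp add: OP_deg)
  also have "coeff (pCons 0 (OP a (k-1))) k = 1"
    using assms OP_lc[of a "k-1"] by (cases k) (auto simp: OP_deg)
  finally have rhs: "gI a ([:0,2:] * f) = 2 * hn a k" by simp
  have bd: "poly f a - poly f (-a) = 2 * poly (OP a k) a * poly (OP a (k-1)) a"
  proof -
    obtain j where j: "k = Suc j" using assms by (cases k) auto
    show ?thesis unfolding f_def j by (simp add: poly_OP_neg algebra_simps)
  qed
  show ?thesis using gI_IBP[OF assms(1), of f] lhs rhs bd by simp
qed

lemma final_alg:
  fixes E a p0 p1 p2 h0 h1 h2 A B C n :: real
  assumes "A*h0 = 2*E*p0^2" "B*h1 = 2*E*p1^2" "C*h2=2*E*p2^2"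
   "n*h0 = 2*h1 - E*(2*p1*p0)" "(n+1)*h1 = 2*h2 - E*(2*p2*p1)" "p2*h0 = a*p1*h0 - h1*p0"
   "h0 \<noteq> 0" "h1 \<noteq> 0" "h2 \<noteq> 0"
  shows "A * C * (B * A + 8 * n) * (C * B + 8 * n + 8)
         = (8 * a^2 * B + B * A * C - 4 * (a * B + n + 1) * C - 4 * (a * B + n) * A)^2"
  using assms by algebra

lemma Rn_mult: "Rn a k * hn a k = 2 * exp (-(a^2)) * (poly (OP a k) a)^2"
  using hn_pos[of a k] by (simp add: Rn_def)

theorem mainTheorem5:
  fixes a :: real and n :: nat
  assumes "a > 0" and "n \<ge> 1"
  shows "Rn a (n-1) * Rn a (n+1) * (Rn a n * Rn a (n-1) + 8 * real n)
           * (Rn a (n+1) * Rn a n + 8 * real n + 8)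
         = (8 * a^2 * Rn a n + Rn a n * Rn a (n-1) * Rn a (n+1)
            - 4 * (a * Rn a n + real n + 1) * Rn a (n+1)
            - 4 * (a * Rn a n + real n) * Rn a (n-1))^2"
proof -
  have I1: "real n * hn a (n-1) = 2 * hn a n - exp (-(a^2)) * (2 * poly (OP a n) a * poly (OP a (n-1)) a)"
    by (rule IBP_id[OF assms])
  have I2: "real (n+1) * hn a (n+1-1) = 2 * hn a (n+1) - exp (-(a^2)) * (2 * poly (OP a (n+1)) a * poly (OP a (n+1-1)) a)"
    by (rule IBP_id) (use assms in auto)
  then have I2': "(real n + 1) * hn a n = 2 * hn a (n+1) - exp (-(a^2)) * (2 * poly (OP a (n+1)) a * poly (OP a n) a)"
    by (simp add: add.commute)
  have Rc: "poly (OP a (n+1)) a * hn a (n-1) = a * poly (OP a n) a * hn a (n-1) - hn a n * poly (OP a (n-1)) a"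
    by (rule poly_OP_rec[OF assms(2)])
  have "hn a (n-1) \<noteq> 0" "hn a n \<noteq> 0" "hn a (n+1) \<noteq> 0" using hn_pos by (auto simp: less_imp_neq[symmetric])
  then show ?thesis
    using final_alg[OF Rn_mult[of a "n-1"] Rn_mult[of a n] Rn_mult[of a "n+1"] I1 I2' Rc] by blast
qed

end
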